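(* Let $n\ge1$, $B=\{0,1,\dots,n\}$ as below, $j\ge0$, $b\in B$, and let $(\mu_i)_{i\in B}\in\mathbb Z^{n+1}$ satisfy $\sum_{i\in B}\mu_i=j$. Put $\mu=(\mu_n-\mu_0)\Lambda_0+(\mu_0-\mu_1)\Lambda_1+\cdots+(\mu_{n-1}-\mu_n)\Lambda_n\in P_{cl}$. Then $$g_j(b,\mu)=q^{\frac12\sum_{i\in B}\mu_i(\mu_i-1)+\sum_{i\in B}H(b\otimes i)\mu_i}\begin{bmatrix}j\\ \mu\end{bmatrix}_q .$$
   Context: Affine algebra $A^{(1)}_n$ with fundamental weights $\Lambda_0,\dots,\Lambda_n$, $P_{cl}=\bigoplus\mathbb Z\Lambda_i$. $B=\{0,1,\dots,n\}$ with weights $wt(b)=\Lambda_{\overline{b+1}}-\Lambda_b$, where $\overline x\in\{0,\dots,n\}$, $\overline x\equiv x\pmod{n+1}$; energy function $H(b\otimes b')=0$ if $b<b'$ and $=1$ if $b\ge b'$. For $j\ge0$, $b\in B$, $\mu\in P_{cl}$: $g_j(b,\mu)=\sum q^{\sum_{i=1}^j iH(b_{i+1}\otimes b_i)}$, summed over $(b_j,\dots,b_1)\in B^j$ with $wt(b_j)+\cdots+wt(b_1)=\mu$, where $b_{j+1}=b$. For an integer vector $\gamma=(\gamma_b)_{b\in B}$: $\begin{bmatrix}j\\ \gamma\end{bmatrix}_q=(q)_j/\prod_{b\in B}(q)_{\gamma_b}$ if $\sum_b\gamma_b=j$ and all $\gamma_b\ge0$, and $0$ otherwise; $(q)_m=\prod_{i=1}^m(1-q^i)$.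 *)

theory Defs
  imports "HOL-Computational_Algebra.Formal_Laurent_Series"
begin

text \<open>Weights in P_cl are integer coefficient vectors \<open>nat \<Rightarrow> int\<close>:
  the value at k is the coefficient of Lambda_k (zero for k > n).\<close>

definition Lam :: "nat \<Rightarrow> nat \<Rightarrow> int" where
  "Lam k = (\<lambda>i. if i = k then 1 else 0)"

definition wt :: "nat \<Rightarrow> nat \<Rightarrow> (nat \<Rightarrow> int)" where
  "wt n b = (\<lambda>k. Lam ((b + 1) mod (n + 1)) k - Lam b k)"

definition H :: "nat \<Rightarrow> nat \<Rightarrow> nat" where
  "H b b' = (if b < b' then 0 else 1)"

text \<open>A path (b_j,...,b_1) is a list xs of length j with xs ! (i-1) = b_i;
  b_{j+1} = b.\<close>
definition pathelt :: "nat \<Rightarrow> nat list \<Rightarrow> nat \<Rightarrow> nat" where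
  "pathelt b xs i = (if i = length xs + 1 then b else xs ! (i - 1))"

definition g :: "nat \<Rightarrow> nat \<Rightarrow> nat \<Rightarrow> (nat \<Rightarrow> int) \<Rightarrow> rat fls" where
  "g n j b mu =
     (\<Sum>xs \<in> {xs. length xs = j \<and> set xs \<subseteq> {0..n} \<and> (\<lambda>k. \<Sum>i<j. wt n (xs ! i) k) = mu}.
        fls_X ^ (\<Sum>i=1..j. i * H (pathelt b xs (i + 1)) (pathelt b xs i)))"

definition qpoch :: "nat \<Rightarrow> rat fls" where
  "qpoch m = (\<Prod>i=1..m. 1 - fls_X ^ i)"

definition qmultinom :: "nat \<Rightarrow> nat \<Rightarrow> (nat \<Rightarrow> int) \<Rightarrow> rat fls" where
  "qmultinom n j \<gamma> =
     (if (\<Sum>b\<le>n. \<gamma> b) = int j \<and> (\<forall>b\<le>n. \<gamma> b \<ge> 0)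
      then qpoch j / (\<Prod>b\<le>n. qpoch (nat (\<gamma> b)))
      else 0)"

definition mu_cl :: "nat \<Rightarrow> (nat \<Rightarrow> int) \<Rightarrow> (nat \<Rightarrow> int)" where
  "mu_cl n m = (\<lambda>k. if k = 0 then m n - m 0 else if k \<le> n then m (k - 1) - m k else 0)"

end

theory Submission
  imports Defs
begin


lemma mod_succ: "(x::nat) \<le> n \<Longrightarrow> (x + 1) mod (n + 1) = (if x = n then 0 else x + 1)"
  by (cases "x = n") auto

lemma wt_single:
  assumes "x \<le> n"
  shows "wt n x = mu_cl n (\<lambda>i. if i = x then 1 else 0)"
proof
  fix k show "wt n x k = mu_cl n (\<lambda>i. if i = x then 1 else 0) k"
  proof (cases "k = 0")
    case True
    have "(x + 1) mod (n + 1) = 0 \<longleftrightarrow> x = n" using assms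
      using mod_succ[OF assms] by auto
    then show ?thesis using True by (auto simp: wt_def mu_cl_def Lam_def)
  next
    case False
    show ?thesis
    proof (cases "k \<le> n")
      case True
      have "(k = (x + 1) mod (n + 1)) \<longleftrightarrow> k = x + 1" using assms True False
        using mod_succ[OF assms] by auto
      then show ?thesis using True False by (auto simp: wt_def mu_cl_def Lam_def)
    next
      case False2: False
      have "(x + 1) mod (n + 1) < n + 1" by simp
      then show ?thesis using False2 assms by (auto simp: wt_def mu_cl_def Lam_def)
    qed
  qed
qed

lemma mu_cl_add: "mu_cl n (\<lambda>i. f i + h i) = (\<lambda>k. mu_cl n f k + mu_cl n h k)"
  by (auto simp: mu_cl_def fun_eq_iff)

lemma weight_count:
  assumes "set xs \<subseteq> {0..n}"
  shows "(\<lambda>k. \<Sum>i<length xs. wt n (xs ! i) k) = mu_cl n (\<lambda>i. int (count_list xs i))"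
  using assms
proof (induction xs)
  case Nil
  then show ?case by (auto simp: mu_cl_def fun_eq_iff)
next
  case (Cons x xs)
  have "(\<lambda>k. \<Sum>i<length (x#xs). wt n ((x#xs) ! i) k) = (\<lambda>k. wt n x k + (\<Sum>i<length xs. wt n (xs ! i) k))"
    by (simp only: length_Cons sum.lessThan_Suc_shift nth_Cons_0 nth_Cons_Suc)
  also have "\<dots> = (\<lambda>k. mu_cl n (\<lambda>i. if i = x then 1 else 0) k + mu_cl n (\<lambda>i. int (count_list xs i)) k)"
    using Cons wt_single[of x n] by (auto simp: fun_eq_iff)
  also have "\<dots> = mu_cl n (\<lambda>i. (if i = x then 1 else 0) + int (count_list xs i))"
    by (simp add: mu_cl_add)
  also have "\<dots> = mu_cl n (\<lambda>i. int (count_list (x#xs) i))"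
    by (rule arg_cong[where f="mu_cl n"]) auto
  finally show ?case .
qed

lemma mu_cl_inj:
  fixes c m :: "nat \<Rightarrow> int"
  assumes "mu_cl n c = mu_cl n m" "(\<Sum>i\<le>n. c i) = (\<Sum>i\<le>n. m i)" "i \<le> n"
  shows "c i = m i"
proof -
  have step: "c k - m k = c 0 - m 0" if "k \<le> n" for k
    using that
  proof (induction k)
    case 0 then show ?case by simp
  next
    case (Suc k)
    have "mu_cl n c (Suc k) = mu_cl n m (Suc k)" using assms(1) by simp
    then have "c k - c (Suc k) = m k - m (Suc k)" using Suc.prems by (simp add: mu_cl_def)
    then show ?case using Suc by simp
  qed
  have "(\<Sum>i\<le>n. c i - m i) = 0" using assms(2) by (simp add: sum_subtractf)
  moreover have "(\<Sum>i\<le>n. c i - m i) = (\<Sum>i\<le>n. c 0 - m 0)" by (intro sum.cong refl) (metis atMost_iff step)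
  moreover have "(\<Sum>i\<le>n. c 0 - m 0) = of_nat (Suc n) * (c 0 - m 0)"
    by (simp only: sum_constant card_atMost)
  ultimately have "of_nat (Suc n) * (c 0 - m 0) = 0" by simp
  then have "c 0 - m 0 = 0" by simp
  then have "c 0 = m 0" by simp
  then show ?thesis using step[OF assms(3)] by simp
qed


definition E :: "nat \<Rightarrow> nat list \<Rightarrow> nat" where
  "E b xs = (\<Sum>i=1..length xs. i * H (pathelt b xs (i + 1)) (pathelt b xs i))"

lemma E_snoc: "E b (xs @ [c]) = (length xs + 1) * H b c + E c xs"
proof -
  have pe: "pathelt b (xs @ [c]) i = pathelt c xs i" if "1 \<le> i" "i \<le> length xs + 1" for i
    using that by (auto simp: pathelt_def nth_append)
  have "E b (xs @ [c]) = (\<Sum>i=1..length xs + 1. i * H (pathelt b (xs@[c]) (i + 1)) (pathelt b (xs@[c]) i))"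
    by (simp add: E_def)
  also have "\<dots> = (\<Sum>i=1..length xs. i * H (pathelt b (xs@[c]) (i + 1)) (pathelt b (xs@[c]) i))
      + (length xs + 1) * H b c"
    by (simp add: pathelt_def)
  also have "(\<Sum>i=1..length xs. i * H (pathelt b (xs@[c]) (i + 1)) (pathelt b (xs@[c]) i))
      = (\<Sum>i=1..length xs. i * H (pathelt c xs (i + 1)) (pathelt c xs i))"
    by (intro sum.cong refl) (simp add: pe)
  finally show ?thesis by (simp add: E_def)
qed

definition W :: "nat \<Rightarrow> nat \<Rightarrow> (nat \<Rightarrow> nat) \<Rightarrow> nat list set" where
  "W n j m = {xs. length xs = j \<and> set xs \<subseteq> {0..n} \<and> (\<forall>i\<le>n. count_list xs i = m i)}"

definition F :: "nat \<Rightarrow> nat \<Rightarrow> nat \<Rightarrow> (nat \<Rightarrow> nat) \<Rightarrow> rat fls" where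
  "F n j b m = (\<Sum>xs\<in>W n j m. fls_X ^ E b xs)"

lemma finite_W: "finite (W n j m)"
proof -
  have "W n j m \<subseteq> {xs. set xs \<subseteq> {0..n} \<and> length xs = j}" by (auto simp: W_def)
  then show ?thesis using finite_lists_length_eq[of "{0..n}" j] finite_subset by blast
qed

lemma W_Suc:
  "W n (Suc j) m = (\<lambda>(c, ys). ys @ [c]) ` (SIGMA c:{c. c \<le> n \<and> m c > 0}. W n j (m(c := m c - 1)))"
proof (intro equalityI subsetI)
  fix xs assume xs: "xs \<in> W n (Suc j) m"
  then have ne: "xs \<noteq> []" by (auto simp: W_def)
  define c where "c = last xs"
  define ys where "ys = butlast xs"
  have xe: "xs = ys @ [c]" using ne by (simp add: c_def ys_def)
  have cn: "c \<le> n" using xs xe by (auto simp: W_def)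
  have mc: "m c = count_list ys c + 1" using xs xe cn by (auto simp: W_def)
  have "ys \<in> W n j (m(c := m c - 1))" using xs xe mc by (auto simp: W_def)
  then show "xs \<in> (\<lambda>(c, ys). ys @ [c]) ` (SIGMA c:{c. c \<le> n \<and> m c > 0}. W n j (m(c := m c - 1)))"
    using xe cn mc by (intro image_eqI[where x="(c, ys)"]) auto
next
  fix xs assume "xs \<in> (\<lambda>(c, ys). ys @ [c]) ` (SIGMA c:{c. c \<le> n \<and> m c > 0}. W n j (m(c := m c - 1)))"
  then obtain c ys where xe: "xs = ys @ [c]" and c: "c \<le> n" "m c > 0" and ys: "ys \<in> W n j (m(c := m c - 1))"
    by auto
  show "xs \<in> W n (Suc j) m" using xe c ys by (auto simp: W_def split: if_splits)
qed

lemma F_Suc: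
  "F n (Suc j) b m = (\<Sum>c\<in>{c. c \<le> n \<and> m c > 0}. fls_X ^ (Suc j * H b c) * F n j c (m(c := m c - 1)))"
proof -
  have inj: "inj_on (\<lambda>(c, ys). ys @ [c]) X" for X :: "(nat \<times> nat list) set"
    by (auto simp: inj_on_def)
  have fin: "finite {c. c \<le> n \<and> m c > 0}" by auto
  have "F n (Suc j) b m = (\<Sum>p\<in>(SIGMA c:{c. c \<le> n \<and> m c > 0}. W n j (m(c := m c - 1))). fls_X ^ E b (snd p @ [fst p]))"
    unfolding F_def W_Suc sum.reindex[OF inj] by (auto simp: case_prod_beta intro!: sum.cong)
  also have "\<dots> = (\<Sum>c\<in>{c. c \<le> n \<and> m c > 0}. \<Sum>ys\<in>W n j (m(c := m c - 1)). fls_X ^ E b (ys @ [c]))"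
    using fin finite_W by (subst sum.Sigma) (auto simp: case_prod_beta)
  also have "\<dots> = (\<Sum>c\<in>{c. c \<le> n \<and> m c > 0}. fls_X ^ (Suc j * H b c) * F n j c (m(c := m c - 1)))"
    unfolding F_def sum_distrib_left
    by (intro sum.cong refl) (auto simp: E_snoc W_def power_add)
  finally show ?thesis .
qed


lemma tele1:
  fixes f :: "nat \<Rightarrow> 'a::comm_ring_1"
  shows "(\<Sum>c\<le>n. y * (f c - f (Suc c))) = y * (f 0 - f (Suc n))"
  by (induction n) (auto simp: algebra_simps)

lemma tele2:
  fixes f :: "nat \<Rightarrow> 'a::comm_ring_1"
  assumes "b \<le> n"
  shows "(\<Sum>c\<le>n. (if b < c then 1 else y) * (f c - f (Suc c))) = y * (f 0 - f (Suc b)) + (f (Suc b) - f (Suc n))"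
  using assms
proof (induction n)
  case 0 then show ?case by simp
next
  case (Suc n)
  show ?case
  proof (cases "b \<le> n")
    case True
    then show ?thesis using Suc by (simp add: algebra_simps)
  next
    case False
    then have b: "b = Suc n" using Suc.prems by simp
    have "(\<Sum>c\<le>Suc n. (if b < c then 1 else y) * (f c - f (Suc c))) = (\<Sum>c\<le>Suc n. y * (f c - f (Suc c)))"
      using b by (intro sum.cong) auto
    then show ?thesis using tele1[of y f "Suc n"] b by simp
  qed
qed

definition P :: "nat \<Rightarrow> (nat \<Rightarrow> nat) \<Rightarrow> rat fls" where
  "P n m = (\<Prod>i\<le>n. qpoch (m i))"
definition Q :: "nat \<Rightarrow> (nat \<Rightarrow> nat) \<Rightarrow> nat" where
  "Q n m = (\<Sum>i\<le>n. m i choose 2)"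
definition T :: "(nat \<Rightarrow> nat) \<Rightarrow> nat \<Rightarrow> nat" where
  "T m k = (\<Sum>i<k. m i)"

lemma qpoch_Suc: "qpoch (Suc k) = qpoch k * (1 - fls_X ^ Suc k)"
  by (simp add: qpoch_def prod.cl_ivl_Suc)

lemma P_upd:
  assumes "c \<le> n" "m c > 0"
  shows "P n m = P n (m(c := m c - 1)) * (1 - fls_X ^ m c)"
proof -
  have fin: "finite {..n}" "c \<in> {..n}" using assms by auto
  have rest: "(\<Prod>i\<in>{..n}-{c}. qpoch (m i)) = (\<Prod>i\<in>{..n}-{c}. qpoch ((m(c := m c - 1)) i))"
    by (intro prod.cong) auto
  have mc: "m c = Suc (m c - 1)" using assms by simp
  have "P n m = qpoch (m c) * (\<Prod>i\<in>{..n}-{c}. qpoch (m i))"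
    unfolding P_def using prod.remove[OF fin] by blast
  moreover have "P n (m(c := m c - 1)) = qpoch (m c - 1) * (\<Prod>i\<in>{..n}-{c}. qpoch ((m(c := m c - 1)) i))"
    unfolding P_def using prod.remove[OF fin, of "\<lambda>i. qpoch ((m(c := m c - 1)) i)"] by simp
  moreover have "qpoch (m c) = qpoch (m c - 1) * (1 - fls_X ^ m c)"
    using qpoch_Suc[of "m c - 1"] by (simp only: mc[symmetric])
  ultimately show ?thesis using rest by (simp only: ac_simps)
qed

lemma Q_upd:
  assumes "c \<le> n" "m c > 0"
  shows "Q n m = Q n (m(c := m c - 1)) + (m c - 1)"
proof -
  have fin: "finite {..n}" "c \<in> {..n}" using assms by auto
  have rest: "(\<Sum>i\<in>{..n}-{c}. m i choose 2) = (\<Sum>i\<in>{..n}-{c}. (m(c := m c - 1)) i choose 2)"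
    by (intro sum.cong) auto
  have ch: "m c choose 2 = (m c - 1 choose 2) + (m c - 1)"
  proof -
    obtain k where k: "m c = Suc k" using assms by (cases "m c") auto
    have "Suc k choose 2 = (k choose 2) + k" by (simp add: numeral_2_eq_2)
    then show ?thesis using k by simp
  qed
  have "Q n m = (m c choose 2) + (\<Sum>i\<in>{..n}-{c}. m i choose 2)"
    unfolding Q_def using sum.remove[OF fin] by blast
  moreover have "Q n (m(c := m c - 1)) = (m c - 1 choose 2) + (\<Sum>i\<in>{..n}-{c}. (m(c := m c - 1)) i choose 2)"
    unfolding Q_def using sum.remove[OF fin, of "\<lambda>i. (m(c := m c - 1)) i choose 2"] by simp
  ultimately show ?thesis using rest ch by linarith
qed

lemma T_upd:
  assumes "m c > 0"
  shows "T (m(c := m c - 1)) (Suc c) = T m c + (m c - 1)"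
proof -
  have "T (m(c := m c - 1)) c = T m c" unfolding T_def by (intro sum.cong) auto
  then show ?thesis using assms by (simp add: T_def)
qed

lemma core:
  assumes "b \<le> n" "(\<Sum>i\<le>n. m i) = j"
  shows "F n j b m * P n m = fls_X ^ (Q n m + T m (Suc b)) * qpoch j"
  using assms
proof (induction j arbitrary: b m)
  case 0
  then have m0: "\<forall>i\<le>n. m i = 0" by simp
  have "W n 0 m = {[]}" using m0 by (auto simp: W_def)
  then have "F n 0 b m = 1" by (simp add: F_def E_def)
  moreover have "P n m = 1" using m0 by (simp add: P_def qpoch_def)
  moreover have "Q n m = 0" using m0 by (simp add: Q_def)
  moreover have "T m (Suc b) = 0" using m0 0 by (simp add: T_def)
  ultimately show ?case by (simp add: qpoch_def)
next
  case (Suc j)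
  define C where "C = {c. c \<le> n \<and> m c > 0}"
  define y :: "rat fls" where "y = fls_X ^ Suc j"
  define f :: "nat \<Rightarrow> rat fls" where "f c = fls_X ^ T m c" for c
  have trm: "fls_X ^ (Suc j * H b c) * F n j c (m(c := m c - 1)) * P n m =
      fls_X ^ Q n m * qpoch j * ((if b < c then 1 else y) * (f c - f (Suc c)))"
    if c: "c \<in> C" for c
  proof -
    let ?M = "m(c := m c - 1)"
    have cn: "c \<le> n" and mc: "m c > 0" using c by (auto simp: C_def)
    have sumM: "(\<Sum>i\<le>n. ?M i) = j"
    proof -
      have "(\<Sum>i\<le>n. m i) = m c + (\<Sum>i\<in>{..n}-{c}. m i)" using cn by (simp add: sum.remove)
      moreover have "(\<Sum>i\<le>n. ?M i) = ?M c + (\<Sum>i\<in>{..n}-{c}. ?M i)" using cn by (simp add: sum.remove)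
      moreover have "(\<Sum>i\<in>{..n}-{c}. ?M i) = (\<Sum>i\<in>{..n}-{c}. m i)" by (intro sum.cong) auto
      ultimately show ?thesis using Suc.prems mc by simp
    qed
    have IH: "F n j c ?M * P n ?M = fls_X ^ (Q n ?M + T ?M (Suc c)) * qpoch j"
      using Suc.IH[OF cn sumM] .
    have ex: "Q n ?M + T ?M (Suc c) = Q n m + T m c"
      using Q_upd[of c n m, OF cn mc] T_upd[of m c, OF mc] mc by simp
    have Tc: "T m (Suc c) = T m c + m c" by (simp add: T_def)
    have "fls_X ^ (Suc j * H b c) * F n j c ?M * P n m
        = fls_X ^ (Suc j * H b c) * (F n j c ?M * P n ?M) * (1 - fls_X ^ m c)"
      unfolding P_upd[of c n m, OF cn mc] by (simp only: ac_simps)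
    also have "\<dots> = fls_X ^ (Suc j * H b c) * fls_X ^ (Q n m + T m c) * qpoch j * (1 - fls_X ^ m c)"
      using IH ex by simp
    also have "\<dots> = fls_X ^ Q n m * qpoch j * ((if b < c then 1 else y) * (f c - f (Suc c)))"
      by (simp add: H_def y_def f_def Tc power_add algebra_simps)
    finally show ?thesis .
  qed
  have "F n (Suc j) b m * P n m = (\<Sum>c\<in>C. fls_X ^ (Suc j * H b c) * F n j c (m(c := m c - 1)) * P n m)"
    by (simp add: F_Suc C_def sum_distrib_right)
  also have "\<dots> = (\<Sum>c\<in>C. fls_X ^ Q n m * qpoch j * ((if b < c then 1 else y) * (f c - f (Suc c))))"
    using trm by (intro sum.cong) auto
  also have "\<dots> = (\<Sum>c\<le>n. fls_X ^ Q n m * qpoch j * ((if b < c then 1 else y) * (f c - f (Suc c))))"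
  proof (rule sum.mono_neutral_left)
    show "\<forall>c\<in>{..n} - C. fls_X ^ Q n m * qpoch j * ((if b < c then 1 else y) * (f c - f (Suc c))) = 0"
      by (auto simp: C_def f_def T_def)
  qed (auto simp: C_def)
  also have "\<dots> = fls_X ^ Q n m * qpoch j * (y * (f 0 - f (Suc b)) + (f (Suc b) - f (Suc n)))"
    by (simp add: sum_distrib_left[symmetric] tele2[OF Suc.prems(1)])
  also have "f 0 = 1" by (simp add: f_def T_def)
  also have "f (Suc n) = y" using Suc.prems by (simp add: f_def T_def y_def atMost_atLeast0 lessThan_Suc_atMost)
  also have "fls_X ^ Q n m * qpoch j * (y * (1 - f (Suc b)) + (f (Suc b) - y)) = fls_X ^ (Q n m + T m (Suc b)) * qpoch (Suc j)"
    by (simp add: qpoch_Suc f_def y_def power_add algebra_simps)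
  finally show ?case .
qed


lemma one_minus_X_nz: "i \<ge> 1 \<Longrightarrow> (1 - fls_X ^ i :: rat fls) \<noteq> 0"
proof
  assume "i \<ge> 1" "(1 - fls_X ^ i :: rat fls) = 0"
  then have "fls_nth (1 - fls_X ^ i :: rat fls) 0 = 0" by simp
  then show False using \<open>i \<ge> 1\<close> by simp
qed

lemma X_pow_ne1: "i \<ge> 1 \<Longrightarrow> (fls_X ^ i :: rat fls) \<noteq> 1"
  using one_minus_X_nz by fastforce

lemma qpoch_nz: "qpoch k \<noteq> 0"
  unfolding qpoch_def by (auto simp: X_pow_ne1)

lemma P_nz: "P n m \<noteq> 0"
  unfolding P_def by (auto simp: qpoch_nz)

lemma choose2_int: "int k * (int k - 1) = 2 * int (k choose 2)"
proof (induction k)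
  case 0 then show ?case by simp
next
  case (Suc k)
  have "Suc k choose 2 = (k choose 2) + k" by (simp add: numeral_2_eq_2)
  then show ?case using Suc by (simp add: algebra_simps)
qed

lemma count_sum_int:
  fixes xs :: "nat list"
  assumes "set xs \<subseteq> {0..n}"
  shows "(\<Sum>i\<le>n. int (count_list xs i)) = int (length xs)"
proof -
  have "(\<Sum>i\<le>n. count_list xs i) = length xs"
  proof -
    have "set xs \<subseteq> {..n}" using assms by auto
    then show ?thesis using sum_count_set[of xs "{..n}"] finite_atMost[of n] by blast
  qed
  then show ?thesis by (metis of_nat_sum)
qed

theorem mainTheorem12:
  fixes n j b :: nat and m :: "nat \<Rightarrow> int"
  assumes "n \<ge> 1" and "b \<le> n"
    and "(\<Sum>i\<le>n. m i) = int j"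
  shows "g n j b (mu_cl n m) =
    (fls_X :: rat fls) powi
      ((\<Sum>i\<le>n. m i * (m i - 1)) div 2 + (\<Sum>i\<le>n. int (H b i) * m i))
    * qmultinom n j m"
proof -
  define S where "S = {xs. length xs = j \<and> set xs \<subseteq> {0..n} \<and> (\<lambda>k. \<Sum>i<j. wt n (xs ! i) k) = mu_cl n m}"
  have Sc: "int (count_list xs i) = m i" if xs: "xs \<in> S" and i: "i \<le> n" for xs i
  proof -
    have l: "length xs = j" and st: "set xs \<subseteq> {0..n}" using xs by (auto simp: S_def)
    have "mu_cl n (\<lambda>i. int (count_list xs i)) = mu_cl n m"
      using xs weight_count[OF st] by (auto simp: S_def)
    moreover have "(\<Sum>i\<le>n. int (count_list xs i)) = (\<Sum>i\<le>n. m i)"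
      using count_sum_int[OF st] l assms(3) by simp
    ultimately show ?thesis using mu_cl_inj i by blast
  qed
  have gS: "g n j b (mu_cl n m) = (\<Sum>xs\<in>S. fls_X ^ E b xs)"
    by (simp add: g_def S_def E_def)
  show ?thesis
  proof (cases "\<exists>i\<le>n. m i < 0")
    case True
    then obtain i where i: "i \<le> n" "m i < 0" by auto
    have "S = {}" using Sc[OF _ i(1)] i(2) by (metis all_not_in_conv of_nat_less_0_iff)
    then have "g n j b (mu_cl n m) = 0" using gS by simp
    moreover have "qmultinom n j m = 0" using i by (auto simp: qmultinom_def)
    ultimately show ?thesis by simp
  next
    case False
    define m' where "m' i = nat (m i)" for i
    have mm: "int (m' i) = m i" if "i \<le> n" for i using False that by (simp add: m'_def not_less)
    have SW: "S = W n j m'"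
    proof (intro equalityI subsetI)
      fix xs assume xs: "xs \<in> S"
      have "\<forall>i\<le>n. count_list xs i = m' i" using Sc[OF xs] mm by (metis of_nat_eq_iff)
      then show "xs \<in> W n j m'" using xs by (auto simp: S_def W_def)
    next
      fix xs assume xs: "xs \<in> W n j m'"
      then have l: "length xs = j" and st: "set xs \<subseteq> {0..n}" by (auto simp: W_def)
      have "mu_cl n (\<lambda>i. int (count_list xs i)) = mu_cl n m"
        using xs mm by (auto simp: mu_cl_def W_def fun_eq_iff)
      then show "xs \<in> S" using weight_count[OF st] l st by (auto simp: S_def)
    qed
    have sum': "(\<Sum>i\<le>n. m' i) = j"
    proof -
      have "int (\<Sum>i\<le>n. m' i) = (\<Sum>i\<le>n. m i)" using mm by (simp add: of_nat_sum)
      then have "int (\<Sum>i\<le>n. m' i) = int j" using assms(3) by simp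
      then show ?thesis by (simp only: of_nat_eq_iff)
    qed
    have core': "F n j b m' * P n m' = fls_X ^ (Q n m' + T m' (Suc b)) * qpoch j"
      using core[OF assms(2) sum'] .
    have gF: "g n j b (mu_cl n m) = F n j b m'" using gS SW by (simp add: F_def)
    have qm: "qmultinom n j m = qpoch j / P n m'"
      using False assms(3) by (auto simp: qmultinom_def P_def m'_def)
    have A: "(\<Sum>i\<le>n. m i * (m i - 1)) = 2 * int (Q n m')"
    proof -
      have "(\<Sum>i\<le>n. m i * (m i - 1)) = (\<Sum>i\<le>n. 2 * int (m' i choose 2))"
        using mm choose2_int by (intro sum.cong) (auto simp flip: mm)
      then show ?thesis by (simp add: Q_def sum_distrib_left of_nat_sum)
    qed
    have B: "(\<Sum>i\<le>n. int (H b i) * m i) = int (T m' (Suc b))"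
    proof -
      have "(\<Sum>i\<le>n. int (H b i) * m i) = (\<Sum>i\<le>n. if i \<le> b then m i else 0)"
        by (intro sum.cong refl) (simp add: H_def not_less)
      also have "\<dots> = (\<Sum>i\<in>{i\<in>{..n}. i \<le> b}. m i)"
        by (rule sum.inter_filter[symmetric]) simp
      also have "{i\<in>{..n}. i \<le> b} = {..<Suc b}" using assms(2) by auto
      also have "(\<Sum>i<Suc b. m i) = (\<Sum>i<Suc b. int (m' i))"
        using assms(2) mm by (intro sum.cong) auto
      finally show ?thesis by (simp add: T_def of_nat_sum)
    qed
    have ex: "(\<Sum>i\<le>n. m i * (m i - 1)) div 2 + (\<Sum>i\<le>n. int (H b i) * m i) = int (Q n m' + T m' (Suc b))"
      unfolding A B by simp
    have "F n j b m' = fls_X ^ (Q n m' + T m' (Suc b)) * qpoch j / P n m'"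
      using core' P_nz[of n m'] by (simp add: field_simps)
    then show ?thesis unfolding gF qm ex power_int_of_nat by simp
  qed
qed

end
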